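(* The Diophantine equation $64 x^6 - 1 = p^3 q^3 y^2$ has no solution with integers $x, y$ and primes $p, q$. *)

theory Defs
  imports "HOL-Computational_Algebra.Primes"
begin

end

theory Submission
  imports Defs "HOL-Computational_Algebra.Nth_Powers"
begin

lemma coprime_lin:
  fixes a b m u v :: int
  assumes "a*u + b*v = m" "coprime a m"
  shows "coprime a b"
proof (rule coprimeI)
  fix c assume c: "c dvd a" "c dvd b"
  then have "c dvd m" using assms(1) by (metis dvd_add dvd_mult2)
  then show "is_unit c" using c(1) assms(2) coprime_common_divisor by blast
qed

lemma coprime_primeI:
  fixes a b :: int
  assumes "\<And>P. prime P \<Longrightarrow> P dvd a \<Longrightarrow> P dvd b \<Longrightarrow> False"
  shows "coprime a b"
proof (rule coprimeI)
  fix c assume c: "c dvd a" "c dvd b"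
  show "is_unit c"
  proof (rule ccontr)
    assume "\<not> is_unit c"
    then have "\<bar>c\<bar> \<noteq> 1" by auto
    then obtain P where "prime P" "P dvd c" using prime_factor_int by blast
    then show False using assms c by (meson dvd_trans)
  qed
qed

lemma coprime_power_int:
  fixes a b c :: int
  assumes "a > 0" "b > 0" "coprime a b" "a*b = c^k"
  shows "\<exists>u. a = u^k"
proof -
  have cp: "coprime (nat a) (nat b)" using assms by (simp add: coprime_int_iff [symmetric])
  have "nat a * nat b = nat (a*b)" using assms(1,2) by (simp add: nat_mult_distrib)
  also have "a*b = \<bar>c\<bar>^k" using assms(4)
    by (metis abs_of_pos assms(1,2) mult_pos_pos power_abs)
  also have "nat (\<bar>c\<bar>^k) = (nat \<bar>c\<bar>)^k" by (simp add: nat_power_eq)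
  finally have "is_nth_power k (nat a * nat b)" by auto
  then have "is_nth_power k (nat a)" using is_nth_power_mult_coprime_natD(1)[OF cp] assms by auto
  then obtain z where "nat a = z^k" by (auto elim: is_nth_powerE)
  then have "a = (int z)^k" using assms(1) by (metis int_nat_eq of_nat_power less_imp_le not_le)
  then show ?thesis by blast
qed

lemma sq_part:
  fixes F G c y :: int
  assumes "F > 0" "coprime F G" "coprime F c" "F*G = c*y^2"
  shows "\<exists>u. F = u^2"
proof -
  have "F dvd c*y^2" using assms(4) by (metis dvd_triv_left)
  then have "F dvd y^2" using assms(3) by (simp add: coprime_dvd_mult_right_iff)
  then obtain k where k: "y^2 = F*k" by (auto elim: dvdE)
  have "F*G = F*(c*k)" using assms(4) k by (simp add: algebra_simps)
  then have G: "G = c*k" using assms(1) by simp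
  have cpk: "coprime F k" using assms(2) G by simp
  show ?thesis
  proof (cases "y = 0")
    case True
    then have "k = 0" using k assms(1) by simp
    then have "is_unit F" using cpk by simp
    then have "F = 1" using assms(1) by simp
    then show ?thesis by (intro exI[of _ 1]) simp
  next
    case False
    then have "y^2 > 0" by simp
    then have "k > 0" using k assms(1) by (simp add: zero_less_mult_iff)
    show ?thesis using coprime_power_int[OF assms(1) \<open>k > 0\<close> cpk] k by metis
  qed
qed

lemma quad3_aux:
  fixes a b w :: int
  assumes "a > 0" "b > 0" "coprime a b" "a*b = 3*w^4" "3 dvd a"
  shows "\<exists>r s. a = 3*r^4 \<and> b = s^4 \<and> w^2 = r^2*s^2 \<and> coprime r s"
proof -
  obtain a' where a': "a = 3*a'" using assms(5) by (auto elim: dvdE)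
  have a'0: "a' > 0" using a' assms(1) by simp
  have e1: "a'*b = w^4" using assms(4) a' by simp
  have cp: "coprime a' b" using assms(3) a' by simp
  obtain r where r: "a' = r^4" using coprime_power_int[OF a'0 assms(2) cp e1] by blast
  have e2: "b*a' = w^4" using e1 by (simp add: mult.commute)
  obtain s where s: "b = s^4" using coprime_power_int[OF assms(2) a'0 _ e2] cp
    by (metis coprime_commute)
  have "(r^2*s^2)^2 = (w^2)^2" using e1 r s by (simp add: power_mult_distrib power_mult[symmetric])
  then have "r^2*s^2 = w^2" using power2_eq_iff_nonneg[of "r^2*s^2" "w^2"] by simp
  moreover have "coprime r s" using cp r s by simp
  ultimately show ?thesis using a' r s by (intro exI[of _ r] exI[of _ s]) auto
qed

lemma quad3:
  fixes a b w :: int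
  assumes "a > 0" "b > 0" "coprime a b" "a*b = 3*w^4"
  shows "\<exists>r s. ((a = r^4 \<and> b = 3*s^4) \<or> (a = 3*r^4 \<and> b = s^4)) \<and> w^2 = r^2*s^2 \<and> coprime r s"
proof -
  have "(3::int) dvd a*b" using assms(4) by simp
  then have "3 dvd a \<or> 3 dvd b" by (simp add: prime_dvd_mult_iff)
  then show ?thesis
  proof
    assume "3 dvd a"
    then show ?thesis using quad3_aux[OF assms] by blast
  next
    assume h: "3 dvd b"
    have "b*a = 3*w^4" using assms(4) by (simp add: mult.commute)
    then obtain r s where "b = 3*r^4 \<and> a = s^4 \<and> w^2 = r^2*s^2 \<and> coprime r s"
      using quad3_aux[OF assms(2) assms(1) _ _ h] assms(3) by (metis coprime_commute)
    then show ?thesis by (intro exI[of _ s] exI[of _ r]) (auto simp: mult.commute coprime_commute)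
  qed
qed

lemma no_sq_between:
  fixes n z :: int
  assumes "n \<ge> 0" "n^2 < z^2" "z^2 < (n+1)^2"
  shows False
proof -
  have "n^2 < \<bar>z\<bar>^2" using assms by simp
  then have "n < \<bar>z\<bar>" by (rule power_less_imp_less_base) simp
  moreover have "\<bar>z\<bar>^2 < (n+1)^2" using assms by simp
  then have "\<bar>z\<bar> < n+1" by (rule power_less_imp_less_base) (use assms in simp)
  ultimately show False by linarith
qed

lemma sq_cases:
  fixes m :: int
  shows "m^2 = 0 \<or> m^2 = 1 \<or> m^2 \<ge> 4"
proof -
  have "m^2 = \<bar>m\<bar>^2" by simp
  consider "\<bar>m\<bar> = 0" | "\<bar>m\<bar> = 1" | "\<bar>m\<bar> \<ge> 2" by linarith
  then show ?thesis
  proof cases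
    case 1
    then show ?thesis by simp
  next
    case 2
    then have "\<bar>m\<bar>^2 = 1" by simp
    then show ?thesis by simp
  next
    case 3
    then have "(2::int)^2 \<le> \<bar>m\<bar>^2" by (intro power_mono) auto
    then show ?thesis by simp
  qed
qed

lemma sq_mod3:
  fixes x :: int
  shows "\<exists>k. x^2 = 3*k \<or> x^2 = 3*k+1"
    and "\<not> 3 dvd x \<Longrightarrow> \<exists>k. x^2 = 3*k+1"
proof -
  define q where "q = x div 3"
  define j where "j = x mod 3"
  have qj: "x = 3*q + j" "j = 0 \<or> j = 1 \<or> j = 2"
  proof -
    show "x = 3*q + j" unfolding q_def j_def by simp
    have "0 \<le> j" "j < 3" unfolding j_def by simp_all
    then show "j = 0 \<or> j = 1 \<or> j = 2" by linarith
  qed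
  have c0: "x^2 = 3*(3*q^2)" if "j = 0" using qj that by (simp add: power2_eq_square algebra_simps)
  have c1: "x^2 = 3*(3*q^2+2*q) + 1" if "j = 1" using qj that by (simp add: power2_eq_square algebra_simps)
  have c2: "x^2 = 3*(3*q^2+4*q+1) + 1" if "j = 2" using qj that by (simp add: power2_eq_square algebra_simps)
  show "\<exists>k. x^2 = 3*k \<or> x^2 = 3*k+1" using qj(2) c0 c1 c2 by blast
  show "\<exists>k. x^2 = 3*k+1" if "\<not> 3 dvd x"
  proof -
    have "j \<noteq> 0" using that qj by auto
    then show ?thesis using qj(2) c1 c2 by blast
  qed
qed



lemma S1:
  fixes m N :: int
  assumes "N^2 = m^4 - 3*m^2 + 3"
  shows "m^2 = 1"
proof -
  define x where "x = m^2"
  have m4: "m^4 = x^2" unfolding x_def by (simp add: power_mult[symmetric])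
  have e: "N^2 = x^2 - 3*x + 3" using assms by (simp only: m4 x_def[symmetric])
  consider "x = 0" | "x = 1" | "x \<ge> 4" using sq_cases[of m] x_def by auto
  then show ?thesis
  proof cases
    case 1
    then have "N^2 = 3" using e by simp
    then show ?thesis using sq_cases[of N] by auto
  next
    case 2 then show ?thesis using x_def by simp
  next
    case 3
    have a: "(x-2)^2 = x^2 - 4*x + 4" by (simp add: power2_eq_square algebra_simps)
    have b: "(x-2+1)^2 = x^2 - 2*x + 1" by (simp add: power2_eq_square algebra_simps)
    have False using a b e 3 by (intro no_sq_between[of "x-2" N]) linarith+
    then show ?thesis ..
  qed
qed

lemma S2:
  fixes r W :: int
  assumes "W^2 = r^4 + 6*r^2 - 3"
  shows "r^2 = 1"
proof -
  define x where "x = r^2"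
  have m4: "r^4 = x^2" unfolding x_def by (simp add: power_mult[symmetric])
  have e: "W^2 = x^2 + 6*x - 3" using assms by (simp only: m4 x_def[symmetric])
  consider "x = 0" | "x = 1" | "x \<ge> 4" using sq_cases[of r] x_def by auto
  then show ?thesis
  proof cases
    case 1
    then have "W^2 = -3" using e by simp
    moreover have "W^2 \<ge> 0" by simp
    ultimately show ?thesis by linarith
  next
    case 2 then show ?thesis using x_def by simp
  next
    case 3
    have a: "(x+2)^2 = x^2 + 4*x + 4" by (simp add: power2_eq_square algebra_simps)
    have b: "(x+2+1)^2 = x^2 + 6*x + 9" by (simp add: power2_eq_square algebra_simps)
    have False using a b e 3 by (intro no_sq_between[of "x+2" W]) linarith+
    then show ?thesis ..
  qed
qed

lemma S3:
  fixes s W :: int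
  assumes "W^2 = 1 + 6*s^2 - 3*s^4" "s \<noteq> 0"
  shows "s^2 = 1"
proof -
  define x where "x = s^2"
  have m4: "s^4 = x^2" unfolding x_def by (simp add: power_mult[symmetric])
  have e: "W^2 = 1 + 6*x - 3*x^2" using assms by (simp only: m4 x_def[symmetric])
  consider "x = 1" | "x \<ge> 4" using sq_cases[of s] x_def assms(2) by auto
  then show ?thesis
  proof cases
    case 1 then show ?thesis using x_def by simp
  next
    case 2
    have "x*x \<ge> 4*x" using 2 by (intro mult_right_mono) auto
    then have "x^2 \<ge> 4*x" by (simp add: power2_eq_square)
    moreover have "W^2 \<ge> 0" by simp
    ultimately show ?thesis using e 2 by linarith
  qed
qed



lemma three_not_dvd_mod:
  fixes m r c :: int
  assumes "\<not> 3 dvd r" "3 dvd (c*m^2 + r^4)" "c = 1 \<or> c = 4"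
  shows False
proof -
  obtain k where k: "r^2 = 3*k+1" using sq_mod3(2)[OF assms(1)] by blast
  obtain j where j: "m^2 = 3*j \<or> m^2 = 3*j+1" using sq_mod3(1) by blast
  have "r^4 = (r^2)^2" by (simp add: power_mult[symmetric])
  also have "\<dots> = 3*(3*k^2+2*k) + 1" unfolding k by (simp add: power2_eq_square algebra_simps)
  finally have r4: "r^4 = 3*(3*k^2+2*k) + 1" .
  define K where "K = 3*k^2+2*k"
  have r4': "r^4 = 3*K + 1" using r4 K_def by simp
  from j assms(3) consider "m^2 = 3*j" "c = 1" | "m^2 = 3*j" "c = 4" | "m^2 = 3*j+1" "c = 1" | "m^2 = 3*j+1" "c = 4" by blast
  then show False
  proof cases
    case 1 then show False using assms(2) r4' by simp presburger
  next
    case 2 then show False using assms(2) r4' by simp presburger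
  next
    case 3 then show False using assms(2) r4' by simp presburger
  next
    case 4 then show False using assms(2) r4' by simp presburger
  qed
qed


lemma PQ:
  fixes m n N :: int
  assumes cop: "coprime m n" and n0: "n \<noteq> 0" and eq: "N^2 = m^4 - 3*m^2*n^2 + 3*n^4"
  shows "\<exists>r s W. coprime r s \<and> r \<noteq> 0 \<and> s \<noteq> 0 \<and> W^2 = r^4 + 6*r^2*s^2 - 3*s^4
           \<and> r^2*s^2 \<le> n^2 \<and> (r^2 = 1 \<and> s^2 = 1 \<longrightarrow> n^2 = 1)"
proof -
  have p3: "prime (3::int)" by simp
  define N0 where "N0 = \<bar>N\<bar>"
  have N0pos: "N0 \<ge> 0" unfolding N0_def by simp
  have eq0: "N0^2 = m^4 - 3*m^2*n^2 + 3*n^4" unfolding N0_def using eq by simp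
  have m3: "\<not> 3 dvd m"
  proof
    assume "3 dvd m"
    then obtain m1 where m1: "m = 3*m1" by (auto elim: dvdE)
    have "N0^2 = 3*(27*m1^4 - 9*m1^2*n^2 + n^4)" using eq0 m1 by (simp add: power_mult_distrib algebra_simps)
    then have "3 dvd N0^2" by simp
    then have "3 dvd N0" using p3 by (simp add: prime_dvd_power_iff)
    then obtain N1 where N1: "N0 = 3*N1" by (auto elim: dvdE)
    have "n^4 = 3*(N1^2 - 9*m1^4 + 3*m1^2*n^2)" using eq0 m1 N1 by (simp add: power_mult_distrib algebra_simps)
    then have "3 dvd n^4" by simp
    then have "3 dvd n" using p3 by (simp add: prime_dvd_power_iff)
    then have "is_unit (3::int)" using cop \<open>3 dvd m\<close> coprime_common_divisor by blast
    then show False by simp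
  qed
  have m3': "\<not> 3 dvd m^2" using m3 p3 by (simp add: prime_dvd_power_iff)
  define K where "K = 2*m^2 - 3*n^2"
  have key0: "(2*N0)^2 - K^2 = 3*n^4"
  proof -
    have "(2*N0)^2 - K^2 = 4*(m^4 - 3*m^2*n^2 + 3*n^4) - (2*m^2 - 3*n^2)^2"
      using eq0 K_def by simp
    also have "\<dots> = 3*n^4" by algebra
    finally show ?thesis .
  qed
  have key: "(2*N0 - K)*(2*N0 + K) = 3*n^4"
    using key0 by (simp add: power2_eq_square algebra_simps)
  have npos: "n^4 > 0" using n0 by simp
  have XY: "2*N0 - K > 0 \<and> 2*N0 + K > 0"
  proof -
    have "K^2 < (2*N0)^2" using key0 npos by linarith
    then have "\<bar>K\<bar>^2 < (2*N0)^2" by simp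
    then have "\<bar>K\<bar> < 2*N0" by (rule power_less_imp_less_base) (use N0pos in simp)
    then show ?thesis by (simp add: abs_less_iff)
  qed
  show ?thesis
  proof (cases "even n")
    case False
    define X where "X = 2*N0 - K"
    define Y where "Y = 2*N0 + K"
    have XY0: "X > 0" "Y > 0" using XY by (auto simp: X_def Y_def)
    have XYe: "X*Y = 3*n^4" using key X_def Y_def by simp
    have d2K: "2*K = Y - X" by (simp add: X_def Y_def)
    have cXY: "coprime X Y"
    proof (rule coprime_primeI)
      fix P :: int assume P: "prime P" "P dvd X" "P dvd Y"
      have "P dvd X*Y" using P by simp
      then have h: "P dvd 3 \<or> P dvd n" using P(1) XYe by (simp add: prime_dvd_mult_iff prime_dvd_power_iff)
      have PK: "P dvd 2*K" unfolding d2K using P by simp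
      show False
        using h
      proof
        assume "P dvd 3"
        then have P3: "P = 3" using P(1) p3 by (simp add: primes_dvd_imp_eq)
        then have "3 dvd 2*K" using PK by simp
        then have "3 dvd K" using p3 by (simp add: prime_dvd_mult_iff)
        moreover have "2*m^2 = K + 3*n^2" by (simp add: K_def)
        ultimately have "3 dvd 2*m^2" by simp
        then have "3 dvd m^2" using p3 by (simp add: prime_dvd_mult_iff)
        then show False using m3' by simp
      next
        assume Pn: "P dvd n"
        have "4*m^2 = 2*K + 6*n^2" by (simp add: K_def)
        moreover have "P dvd 6*n^2" using Pn by (simp add: power2_eq_square)
        ultimately have "P dvd 4*m^2" using PK by (metis dvd_add)
        then have "P dvd 4 \<or> P dvd m" using P(1) by (simp add: prime_dvd_mult_iff prime_dvd_power_iff)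
        then show False
        proof
          assume "P dvd 4"
          then have "P dvd 2*2" by simp
          then have "P dvd 2" using P(1) prime_dvd_mult_iff by blast
          then have "P = 2" using P(1) by (simp add: primes_dvd_imp_eq)
          then show False using Pn False by simp
        next
          assume "P dvd m"
          then have "is_unit P" using cop Pn coprime_common_divisor by blast
          then show False using P(1) not_prime_unit by blast
        qed
      qed
    qed
    obtain r s where rs: "(X = r^4 \<and> Y = 3*s^4) \<or> (X = 3*r^4 \<and> Y = s^4)" "n^2 = r^2*s^2" "coprime r s"
      using quad3[OF XY0 cXY XYe] by blast
    have r0: "r \<noteq> 0" "s \<noteq> 0" using rs(2) n0 by auto
    have main: "4*m^2 = Y - X + 6*(r^2*s^2)"
      using d2K rs(2)[symmetric] by (simp add: K_def)
    from rs(1) show ?thesis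
    proof
      assume h: "X = r^4 \<and> Y = 3*s^4"
      have r3: "\<not> 3 dvd r"
      proof
        assume "3 dvd r"
        then have "3 dvd X" "3 dvd Y" using h by auto
        then have "is_unit (3::int)" using cXY coprime_common_divisor by blast
        then show False by simp
      qed
      have "4*m^2 + r^4 = 3*(s^4 + 2*r^2*s^2)" using main h by (simp add: algebra_simps)
      then have "3 dvd (4*m^2 + r^4)" by simp
      then show ?thesis using three_not_dvd_mod[OF r3, of 4 m] by simp
    next
      assume h: "X = 3*r^4 \<and> Y = s^4"
      have W: "(2*m)^2 = s^4 + 6*s^2*r^2 - 3*r^4" using main h by (simp add: power_mult_distrib algebra_simps)
      show ?thesis
        by (rule exI[of _ s], rule exI[of _ r], rule exI[of _ "2*m"])
          (use W r0 rs in \<open>auto simp: coprime_commute mult.commute\<close>)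
    qed
  next
    case True
    obtain n1 where n1: "n = 2*n1" using True by (auto elim: evenE)
    have om: "odd m"
    proof
      assume "even m"
      then have "is_unit (2::int)" using cop True coprime_common_divisor by blast
      then show False by simp
    qed
    obtain m1 where m1: "m = 2*m1+1" using om by (auto elim: oddE)
    have "odd (N0^2)" using eq0 om True by simp
    then have "odd N0" by simp
    then obtain N1 where N1: "N0 = 2*N1+1" by (auto elim: oddE)
    define a where "a = N1 - 2*m1^2 - 2*m1 + 3*n1^2"
    define b where "b = N1 + 1 + 2*m1^2 + 2*m1 - 3*n1^2"
    have X4: "2*N0 - K = 4*a" by (simp add: a_def K_def N1 m1 n1 power2_eq_square algebra_simps)
    have Y4: "2*N0 + K = 4*b" by (simp add: b_def K_def N1 m1 n1 power2_eq_square algebra_simps)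
    have "16*(a*b) = (4*a)*(4*b)" by simp
    also have "\<dots> = (2*N0 - K)*(2*N0 + K)" using X4 Y4 by simp
    also have "\<dots> = 3*n^4" by (rule key)
    also have "\<dots> = 16*(3*n1^4)" using n1 by (simp add: power_mult_distrib)
    finally have "16*(a*b) = 16*(3*n1^4)" .
    then have abe: "a*b = 3*n1^4" by simp
    have ab0: "a > 0" "b > 0" using XY X4 Y4 by auto
    have bma: "b - a = m^2 - 6*n1^2" by (simp add: a_def b_def m1 power2_eq_square algebra_simps)
    have cab: "coprime a b"
    proof (rule coprime_primeI)
      fix P :: int assume P: "prime P" "P dvd a" "P dvd b"
      have "P dvd a*b" using P by simp
      then have h: "P dvd 3 \<or> P dvd n1" using P(1) abe by (simp add: prime_dvd_mult_iff prime_dvd_power_iff)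
      have Pd: "P dvd m^2 - 6*n1^2" unfolding bma[symmetric] using P by simp
      show False
        using h
      proof
        assume "P dvd 3"
        then have P3: "P = 3" using P(1) p3 by (simp add: primes_dvd_imp_eq)
        have "m^2 = (m^2 - 6*n1^2) + 3*(2*n1^2)" by simp
        then have "3 dvd m^2" using Pd P3 by (metis dvd_add dvd_triv_left)
        then show False using m3' by simp
      next
        assume Pn: "P dvd n1"
        have "m^2 = (m^2 - 6*n1^2) + 6*n1*n1" by (simp add: power2_eq_square)
        then have "P dvd m^2" using Pd Pn by (metis dvd_add dvd_mult2 dvd_mult)
        then have "P dvd m" using P(1) by (simp add: prime_dvd_power_iff)
        moreover have "P dvd n" using Pn n1 by simp
        ultimately have "is_unit P" using cop coprime_common_divisor by blast
        then show False using P(1) not_prime_unit by blast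
      qed
    qed
    obtain r s where rs: "(a = r^4 \<and> b = 3*s^4) \<or> (a = 3*r^4 \<and> b = s^4)" "n1^2 = r^2*s^2" "coprime r s"
      using quad3[OF ab0 cab abe] by blast
    have r0: "r \<noteq> 0" "s \<noteq> 0" using rs(2) n0 n1 by auto
    have main: "m^2 = b - a + 6*(r^2*s^2)" using bma rs(2) by simp
    have nn: "n^2 = 4*(r^2*s^2)" using n1 rs(2) by (simp add: power_mult_distrib)
    from rs(1) show ?thesis
    proof
      assume h: "a = r^4 \<and> b = 3*s^4"
      have r3: "\<not> 3 dvd r"
      proof
        assume "3 dvd r"
        then have "3 dvd a" "3 dvd b" using h by auto
        then have "is_unit (3::int)" using cab coprime_common_divisor by blast
        then show False by simp
      qed
      have "1*m^2 + r^4 = 3*(s^4 + 2*r^2*s^2)" using main h by (simp add: algebra_simps)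
      then have "3 dvd (1*m^2 + r^4)" by simp
      then show ?thesis using three_not_dvd_mod[OF r3, of 1 m] by simp
    next
      assume h: "a = 3*r^4 \<and> b = s^4"
      have W: "m^2 = s^4 + 6*s^2*r^2 - 3*r^4" using main h by (simp add: algebra_simps)
      have last: "\<not> (s^2 = 1 \<and> r^2 = 1)"
      proof
        assume h2: "s^2 = 1 \<and> r^2 = 1"
        have "s^4 = s^2*s^2" "r^4 = r^2*r^2" by algebra+
        then have "s^4 = 1" "r^4 = 1" using h2 by simp_all
        then have "m^2 = 4" using W h2 by simp
        then have "even (m^2)" by simp
        then show False using om by simp
      qed
      have bd: "s^2*r^2 \<le> n^2" using nn by (simp add: mult.commute)
      show ?thesis
        by (rule exI[of _ s], rule exI[of _ r], rule exI[of _ m])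
          (use W r0 rs last bd in \<open>auto simp: coprime_commute\<close>)
    qed
  qed
qed



lemma QP:
  fixes M e N :: int
  assumes cop: "coprime M e" and e0: "e \<noteq> 0" and eq: "N^2 = M^4 + 6*M^2*e^2 - 3*e^4"
  shows "\<exists>r s W. coprime r s \<and> W^2 = r^4 - 3*r^2*s^2 + 3*s^4 \<and> e^2 = r^2*s^2"
proof -
  have p3: "prime (3::int)" by simp
  define N0 where "N0 = \<bar>N\<bar>"
  have N0pos: "N0 \<ge> 0" unfolding N0_def by simp
  have eq0: "N0^2 = M^4 + 6*M^2*e^2 - 3*e^4" unfolding N0_def using eq by simp
  have m3: "\<not> 3 dvd M"
  proof
    assume "3 dvd M"
    then obtain m1 where m1: "M = 3*m1" by (auto elim: dvdE)
    have "N0^2 = 3*(27*m1^4 + 18*m1^2*e^2 - e^4)" using eq0 m1 by (simp add: power_mult_distrib algebra_simps)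
    then have "3 dvd N0^2" by simp
    then have "3 dvd N0" using p3 by (simp add: prime_dvd_power_iff)
    then obtain N1 where N1: "N0 = 3*N1" by (auto elim: dvdE)
    have "e^4 = 3*(9*m1^4 + 6*m1^2*e^2 - N1^2)" using eq0 m1 N1 by (simp add: power_mult_distrib algebra_simps)
    then have "3 dvd e^4" by simp
    then have "3 dvd e" using p3 by (simp add: prime_dvd_power_iff)
    then have "is_unit (3::int)" using cop \<open>3 dvd M\<close> coprime_common_divisor by blast
    then show False by simp
  qed
  have m3': "\<not> 3 dvd M^2" using m3 p3 by (simp add: prime_dvd_power_iff)
  define L where "L = M^2 + 3*e^2"
  have key0: "L^2 - N0^2 = 12*e^4"
  proof -
    have "L^2 - N0^2 = (M^2 + 3*e^2)^2 - (M^4 + 6*M^2*e^2 - 3*e^4)" using eq0 L_def by simp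
    also have "\<dots> = 12*e^4" by algebra
    finally show ?thesis .
  qed
  have key: "(L - N0)*(L + N0) = 12*e^4" using key0 by (simp add: power2_eq_square algebra_simps)
  have epos: "e^4 > 0" using e0 by simp
  have LN: "N0 < L"
  proof -
    have "N0^2 < L^2" using key0 epos by linarith
    then show ?thesis by (rule power_less_imp_less_base) (simp add: L_def)
  qed
  have ev: "even (L - N0)"
  proof (rule ccontr)
    assume o: "odd (L - N0)"
    have "L + N0 = (L - N0) + 2*N0" by simp
    then have "odd (L + N0)" using o by simp
    then have "odd ((L - N0)*(L + N0))" using o by simp
    then show False unfolding key by simp
  qed
  from ev obtain a where a: "L - N0 = 2*a" by (rule evenE)
  define b where "b = a + N0"
  have b: "L + N0 = 2*b" using a b_def by simp
  have "4*(a*b) = 4*(3*e^4)" using key a b by simp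
  then have abe: "a*b = 3*e^4" by simp
  have ab0: "a > 0" "b > 0" using LN a b N0pos by auto
  have sum: "a + b = L" using a b by simp
  have dif: "b - a = N0" using a b by simp
  have cab: "coprime a b"
  proof (rule coprime_primeI)
    fix P :: int assume P: "prime P" "P dvd a" "P dvd b"
    have "P dvd a*b" using P by simp
    then have h: "P dvd 3 \<or> P dvd e" using P(1) abe by (simp add: prime_dvd_mult_iff prime_dvd_power_iff)
    have PL: "P dvd L" unfolding sum[symmetric] using P by simp
    show False
      using h
    proof
      assume "P dvd 3"
      then have P3: "P = 3" using P(1) p3 by (simp add: primes_dvd_imp_eq)
      have "M^2 = L - 3*e^2" by (simp add: L_def)
      then have "3 dvd M^2" using PL P3 by (metis dvd_diff dvd_triv_left)
      then show False using m3' by simp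
    qed (insert PL, metis L_def add_diff_cancel_right' cop coprime_common_divisor dvd_diff dvd_mult
          not_prime_unit P(1) power2_eq_square prime_dvd_power_iff zero_less_numeral)
  qed
  obtain r s where rs: "(a = r^4 \<and> b = 3*s^4) \<or> (a = 3*r^4 \<and> b = s^4)" "e^2 = r^2*s^2" "coprime r s"
    using quad3[OF ab0 cab abe] by blast
  from rs(1) show ?thesis
  proof
    assume h: "a = r^4 \<and> b = 3*s^4"
    have "M^2 = r^4 - 3*r^2*s^2 + 3*s^4" using h sum rs(2) L_def by simp
    then show ?thesis using rs by blast
  next
    assume h: "a = 3*r^4 \<and> b = s^4"
    have "M^2 = s^4 - 3*s^2*r^2 + 3*r^4" using h sum rs(2) L_def by (simp add: algebra_simps)
    moreover have "e^2 = s^2*r^2" using rs(2) by (simp add: mult.commute)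
    moreover have "coprime s r" using rs(3) by (simp add: coprime_commute)
    ultimately show ?thesis by blast
  qed
qed



lemma descent_aux:
  fixes k :: nat
  shows "\<And>m n N :: int. nat \<bar>n\<bar> = k \<Longrightarrow> coprime m n \<Longrightarrow> n \<noteq> 0 \<Longrightarrow>
           N^2 = m^4 - 3*m^2*n^2 + 3*n^4 \<Longrightarrow> m^2 = 1 \<and> n^2 = 1"
proof (induction k rule: less_induct)
  case (less k)
  fix m n N :: int
  assume k: "nat \<bar>n\<bar> = k" and cop: "coprime m n" and n0: "n \<noteq> 0"
    and eq: "N^2 = m^4 - 3*m^2*n^2 + 3*n^4"
  obtain r s W where rs: "coprime r s" "r \<noteq> 0" "s \<noteq> 0" "W^2 = r^4 + 6*r^2*s^2 - 3*s^4"
      "r^2*s^2 \<le> n^2" "r^2 = 1 \<and> s^2 = 1 \<longrightarrow> n^2 = 1"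
    using PQ[OF cop n0 eq] by blast
  obtain r' s' W' where rs': "coprime r' s'" "W'^2 = r'^4 - 3*r'^2*s'^2 + 3*s'^4" "s^2 = r'^2*s'^2"
    using QP[OF rs(1) rs(3) rs(4)] by blast
  have r'0: "r' \<noteq> 0" "s' \<noteq> 0" using rs'(3) rs(3) by auto
  have "r'^2 \<ge> 1" using r'0 sq_cases[of r'] by auto
  then have "1*s'^2 \<le> r'^2*s'^2" by (intro mult_right_mono) auto
  then have s's: "s'^2 \<le> s^2" using rs'(3) by simp
  have "r^2 \<ge> 1" using rs(2) sq_cases[of r] by auto
  then have "1*s^2 \<le> r^2*s^2" by (intro mult_right_mono) auto
  then have ssr: "s^2 \<le> r^2*s^2" by simp
  have s1: "s^2 = 1"
  proof (cases "s'^2 < n^2")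
    case True
    have "\<bar>s'\<bar>^2 < \<bar>n\<bar>^2" using True by simp
    then have "\<bar>s'\<bar> < \<bar>n\<bar>" by (rule power_less_imp_less_base) simp
    then have "nat \<bar>s'\<bar> < k" using k by simp
    then show ?thesis using less.IH[OF _ refl rs'(1) r'0(2) rs'(2)] rs'(3) by simp
  next
    case False
    then have "s^2 = r^2*s^2" using s's ssr rs(5) by linarith
    then have "r^2 = 1" using rs(3) by simp
    moreover have "r^4 = r^2*r^2" by algebra
    ultimately have "r^4 = 1" by simp
    then have "W^2 = 1 + 6*s^2 - 3*s^4" using rs(4) \<open>r^2 = 1\<close> by simp
    then show ?thesis using S3 rs(3) by blast
  qed
  have s4: "s^4 = 1"
  proof -
    have "s^4 = s^2*s^2" by algebra
    then show ?thesis using s1 by simp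
  qed
  have "W^2 = r^4 + 6*r^2 - 3" using rs(4) s1 s4 by simp
  then have r1: "r^2 = 1" by (rule S2)
  then have n1: "n^2 = 1" using rs(6) s1 by simp
  have n4: "n^4 = 1"
  proof -
    have "n^4 = n^2*n^2" by algebra
    then show ?thesis using n1 by simp
  qed
  have "N^2 = m^4 - 3*m^2 + 3" using eq n1 n4 by simp
  then have "m^2 = 1" by (rule S1)
  then show "m^2 = 1 \<and> n^2 = 1" using n1 by simp
qed

lemma descent:
  fixes m n N :: int
  assumes "coprime m n" "n \<noteq> 0" "N^2 = m^4 - 3*m^2*n^2 + 3*n^4"
  shows "m^2 = 1 \<and> n^2 = 1"
  using descent_aux[OF refl assms] .

lemma euler_key:
  fixes a b :: int
  assumes "a \<noteq> 0" "b^2 = 3*a^4 - 3*a^2 + 1"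
  shows "a^2 = 1"
  using descent[of 1 a b] assms by (simp add: algebra_simps)



lemma nsq1:
  fixes n v :: int
  assumes "n \<ge> 1"
  shows "n^2 + n + 1 \<noteq> v^2"
proof
  assume h: "n^2 + n + 1 = v^2"
  have "(n+1)^2 = n^2 + 2*n + 1" by (simp add: power2_eq_square algebra_simps)
  then show False using no_sq_between[of n v] h assms by linarith
qed

lemma nsq2:
  fixes n v :: int
  assumes "n \<ge> 2"
  shows "n^2 - n + 1 \<noteq> v^2"
proof
  assume h: "n^2 - n + 1 = v^2"
  have "(n-1)^2 = n^2 - 2*n + 1" by (simp add: power2_eq_square algebra_simps)
  moreover have "(n-1+1)^2 = n^2" by simp
  ultimately show False using no_sq_between[of "n-1" v] h assms by linarith
qed

lemma cop_pq:
  fixes p q X :: int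
  assumes "prime p" "prime q" "\<not> p dvd X" "\<not> q dvd X"
  shows "coprime X (p^3*q^3)"
proof -
  have "coprime X (p^3)" using prime_imp_power_coprime[OF assms(1,3)] .
  moreover have "coprime X (q^3)" using prime_imp_power_coprime[OF assms(2,4)] .
  ultimately show ?thesis by simp
qed

lemma sq_diff2:
  fixes r s :: int
  assumes "s^2 = r^2 + 2"
  shows False
proof -
  have "\<bar>r\<bar>^2 < \<bar>s\<bar>^2" using assms by simp
  then have "\<bar>r\<bar> < \<bar>s\<bar>" by (rule power_less_imp_less_base) simp
  then have "\<bar>r\<bar> + 1 \<le> \<bar>s\<bar>" by simp
  then have "(\<bar>r\<bar> + 1)^2 \<le> \<bar>s\<bar>^2" by (intro power_mono) auto
  then have "\<bar>r\<bar>^2 + 2*\<bar>r\<bar> + 1 \<le> \<bar>s\<bar>^2" by (simp add: power2_eq_square algebra_simps)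
  then have "2*\<bar>r\<bar> + 1 \<le> 2" using assms by simp
  then have "r = 0" by simp
  then show False using assms sq_cases[of s] by simp
qed

lemma gap:
  fixes r e a b :: int
  assumes r2: "r \<ge> 2" and e: "e = 1 \<or> e = -1" and h1: "r^2 + 2 = 3*a^2" and h2: "r^2 + e*r + 1 = 3*b^2"
  shows False
proof -
  have d: "e*r - 1 = 3*(b^2 - a^2)" using h1 h2 by simp
  have ee: "e^2 = 1" using e by auto
  show False
  proof (cases "b^2 = a^2")
    case True
    then have "e*r = 1" using d by simp
    then show False using e r2 by auto
  next
    case False
    define A0 where "A0 = \<bar>a\<bar>"
    define B0 where "B0 = \<bar>b\<bar>"
    have A0: "A0 \<ge> 0" "a^2 = A0^2" by (simp_all add: A0_def)
    have B0: "B0 \<ge> 0" "b^2 = B0^2" by (simp_all add: B0_def)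
    have fac: "b^2 - a^2 = (B0 - A0)*(B0 + A0)" using A0 B0 by (simp add: power2_eq_square algebra_simps)
    have "(b^2 - a^2)^2 \<ge> a^2"
    proof (cases "B0 > A0")
      case True
      then have "(B0 - A0)*(B0 + A0) \<ge> 1*(B0 + A0)" using A0 B0 by (intro mult_right_mono) auto
      then have "b^2 - a^2 \<ge> A0" using fac A0 B0 by simp
      then have "(b^2 - a^2)^2 \<ge> A0^2" using A0 by (intro power_mono) auto
      then show ?thesis using A0 by simp
    next
      case False
      then have "B0 \<noteq> A0" using \<open>b^2 \<noteq> a^2\<close> A0 B0 by auto
      then have "A0 > B0" using False by simp
      then have "(A0 - B0)*(B0 + A0) \<ge> 1*(B0 + A0)" using A0 B0 by (intro mult_right_mono) auto
      then have "a^2 - b^2 \<ge> A0" using fac A0 B0 by (simp add: algebra_simps)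
      then have "(a^2 - b^2)^2 \<ge> A0^2" using A0 by (intro power_mono) auto
      moreover have "(a^2 - b^2)^2 = (b^2 - a^2)^2" by (simp add: power2_eq_square algebra_simps)
      ultimately show ?thesis using A0 by simp
    qed
    moreover have "(3*(b^2 - a^2))^2 = 9*(b^2 - a^2)^2" by algebra
    ultimately have "(e*r - 1)^2 \<ge> 9*a^2" unfolding d by linarith
    moreover have "(e*r - 1)^2 = r^2 - 2*e*r + 1" using ee by (simp add: power2_eq_square algebra_simps)
    ultimately have "r^2 - 2*e*r + 1 \<ge> 3*(r^2 + 2)" using h1 by simp
    moreover have "r^2 \<ge> r" using r2 by (simp add: power2_eq_square)
    ultimately show False using e r2 by auto
  qed
qed



lemma coprime_AB:
  fixes t :: int
  assumes "even t"
  shows "coprime (t^3 - 1) (t^3 + 1)"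
proof (rule coprime_lin[of _ "-1" _ 1 2])
  show "(t^3 - 1) * -1 + (t^3 + 1) * 1 = 2" by simp
  have "odd (t^3 - 1)" using assms by simp
  then have "\<not> 2 dvd (t^3 - 1)" by simp
  then show "coprime (t^3 - 1) 2" using prime_imp_coprime[of 2 "t^3 - 1"] by (simp add: coprime_commute)
qed

lemma caseA:
  fixes t u p q y :: int
  assumes t: "t = 2*u" "u \<ge> 2" and eq: "(t^3 - 1)*(t^3 + 1) = p^3*q^3*y^2"
    and pq: "prime p" "prime q" and np: "\<not> p dvd (t^3 + 1)" and nq: "\<not> q dvd (t^3 + 1)"
  shows False
proof -
  have p3: "prime (3::int)" by simp
  have t4: "t \<ge> 4" using t by simp
  have cAB: "coprime (t^3 + 1) (t^3 - 1)" using coprime_AB[of t] t by (simp add: coprime_commute)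
  have Bpos: "t^3 + 1 > 0"
  proof -
    have "t^3 \<ge> 4^3" using t4 by (intro power_mono) auto
    then have "t^3 \<ge> 64" by simp
    then show ?thesis by linarith
  qed
  obtain v where v: "t^3 + 1 = v^2"
    using sq_part[OF Bpos cAB cop_pq[OF pq np nq], of y] eq by (auto simp: mult.commute)
  define C2 where "C2 = t^2 - t + 1"
  have BC: "t^3 + 1 = (t+1)*C2" by (simp add: C2_def power2_eq_square power3_eq_cube algebra_simps)
  show False
  proof (cases "3 dvd t + 1")
    case False
    have c3: "coprime (t+1) 3" using prime_imp_coprime[OF p3 False] by (simp add: coprime_commute)
    have "coprime (t+1) C2"
      by (rule coprime_lin[of _ "2 - t" _ 1 3]) (use c3 in \<open>simp_all add: C2_def power2_eq_square algebra_simps\<close>)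
    then have cC: "coprime C2 (t+1)" by (simp add: coprime_commute)
    have "t*t \<ge> t" using t4 by simp
    then have C2pos: "C2 > 0" unfolding C2_def by (simp add: power2_eq_square)
    obtain w where "C2 = w^2" using sq_part[OF C2pos cC, of 1 v] v BC by (auto simp: mult.commute)
    then show False using nsq2[of t w] t4 C2_def by simp
  next
    case True
    then obtain k where k: "t + 1 = 3*k" by (auto elim: dvdE)
    have k1: "k \<ge> 1" using k t4 by simp
    define C2' where "C2' = 3*k^2 - 3*k + 1"
    have tk: "t = 3*k - 1" using k by simp
    have C2e: "C2 = 3*C2'" unfolding C2_def C2'_def tk by (simp add: power2_eq_square algebra_simps)
    have "v^2 = 9*(k*C2')" using v BC C2e k by simp
    then have "v^2 = 3*(3*(k*C2'))" by simp
    then have "3 dvd v^2" by (metis dvd_triv_left)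
    then have "3 dvd v" using p3 by (simp add: prime_dvd_power_iff)
    then obtain v1 where v1: "v = 3*v1" by (auto elim: dvdE)
    have kC: "k*C2' = v1^2" using \<open>v^2 = 9*(k*C2')\<close> v1 by (simp add: power_mult_distrib)
    have ckC: "coprime k C2'"
      by (rule coprime_lin[of _ "3 - 3*k" _ 1 1]) (simp_all add: C2'_def power2_eq_square algebra_simps)
    have kpos: "k > 0" using k1 by simp
    have Cpos: "C2' > 0"
    proof -
      have "k*k \<ge> k" using k1 by simp
      then show ?thesis unfolding C2'_def by (simp add: power2_eq_square)
    qed
    obtain a where a: "k = a^2" using coprime_power_int[OF kpos Cpos ckC kC] by blast
    obtain b where b: "C2' = b^2" using coprime_power_int[OF Cpos kpos _ , of v1 2] ckC kC
      by (metis coprime_commute mult.commute)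
    have a0: "a \<noteq> 0" using a kpos by auto
    have "k^2 = a^4" using a by (simp add: power_mult[symmetric])
    then have "b^2 = 3*a^4 - 3*a^2 + 1" using b a C2'_def by simp
    then have "a^2 = 1" using euler_key a0 by blast
    then have "k = 1" using a by simp
    then show False using k t4 by simp
  qed
qed

lemma caseB:
  fixes t u p q y :: int
  assumes t: "t = 2*u" "u \<ge> 2" and eq: "(t^3 - 1)*(t^3 + 1) = p^3*q^3*y^2"
    and pq: "prime p" "prime q" and np: "\<not> p dvd (t^3 - 1)" and nq: "\<not> q dvd (t^3 - 1)"
  shows False
proof -
  have t4: "t \<ge> 4" using t by simp
  have cAB: "coprime (t^3 - 1) (t^3 + 1)" using coprime_AB[of t] t by simp
  have Apos: "t^3 - 1 > 0"
  proof -
    have "t^3 \<ge> 4^3" using t4 by (intro power_mono) auto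
    then have "t^3 \<ge> 64" by simp
    then show ?thesis by linarith
  qed
  obtain w where w: "t^3 - 1 = w^2"
    using sq_part[OF Apos cAB cop_pq[OF pq np nq], of y] eq by auto
  have "odd (t^3 - 1)" using t by simp
  then have "odd w" using w by simp
  then obtain j where j: "w = 2*j + 1" by (auto elim: oddE)
  have "w^2 = 4*(j^2 + j) + 1" using j by (simp add: power2_eq_square algebra_simps)
  moreover have "t^3 = 8*u^3" using t by (simp add: power_mult_distrib)
  ultimately have "8*u^3 - 1 = 4*(j^2+j) + 1" using w by simp
  then have "2 = 4*(2*u^3 - j^2 - j)" by (simp add: algebra_simps)
  then have "(4::int) dvd 2" by (metis dvd_triv_left)
  then show False by simp
qed



lemma hard:
  fixes r e t p q y :: int
  assumes r2: "r \<ge> 2" and e: "e = 1 \<or> e = -1" and t: "t = r^2 + 1" and te: "even t"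
    and t3: "3 dvd t + 1" and d3: "3 dvd r^2 + e*r + 1"
    and eq: "(t^3 - 1)*(t^3 + 1) = p^3*q^3*y^2" and pq: "prime p" "prime q"
    and pA: "p dvd t^3 - 1" and npB: "\<not> p dvd t^3 + 1" and nqA: "\<not> q dvd t^3 - 1"
  shows False
proof -
  have p3: "prime (3::int)" by simp
  have ee: "e*e = 1" using e by auto
  define A where "A = t^3 - 1"
  define B where "B = t^3 + 1"
  define Di where "Di = r^2 + e*r + 1"
  define Dj where "Dj = r^2 - e*r + 1"
  have DD: "Di*Dj = r^4 + r^2 + 1"
  proof -
    have "Di*Dj = r^4 + 2*r^2 + 1 - (e*e)*r^2" unfolding Di_def Dj_def by algebra
    then show ?thesis using ee by simp
  qed
  have Bf: "B = (t+1)*(Di*Dj)" unfolding B_def DD t by algebra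
  have eqAB: "A*B = p^3*q^3*y^2" using eq A_def B_def by simp
  have cAB: "coprime A B" using coprime_AB[OF te] A_def B_def by simp
  obtain k where k: "t + 1 = 3*k" using t3 by (auto elim: dvdE)
  have tk: "t = 3*k - 1" using k by simp
  have r3: "\<not> 3 dvd r"
  proof
    assume "3 dvd r"
    then have "3 dvd r^2" by (simp add: power2_eq_square)
    moreover have "r^2 = 3*(k - 1) + 1" using t k by simp
    ultimately have "3 dvd 3*(k-1) + 1" by simp
    then show False by presburger
  qed
  have Dj3: "\<not> 3 dvd Dj"
  proof
    assume "3 dvd Dj"
    moreover have "3 dvd Di" using d3 Di_def by simp
    ultimately have "3 dvd Di - Dj" by simp
    moreover have "Di - Dj = 2*e*r" unfolding Di_def Dj_def by simp
    ultimately have "3 dvd 2*e*r" by simp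
    then have "(3::int) dvd 2 \<or> 3 dvd e \<or> 3 dvd r" using p3 by (simp add: prime_dvd_mult_iff)
    then show False using e r3 by auto
  qed
  have Djodd: "odd Dj"
  proof -
    have "Dj = r*(r - e) + 1" unfolding Dj_def by (simp add: power2_eq_square algebra_simps)
    moreover have "even (r*(r - e))" using e by auto
    ultimately show ?thesis by simp
  qed
  have rr: "r*r \<ge> r" using r2 by simp
  have Dpos: "Di > 0" "Dj > 0" using rr e r2 unfolding Di_def Dj_def power2_eq_square by auto
  have cDD: "coprime Dj Di"
  proof (rule coprime_lin[of Dj "2 + Di - Dj" Di "2 - Di + Dj" 4])
    have "Dj*(2 + Di - Dj) + Di*(2 - Di + Dj) = 2*(Di + Dj) - (Di - Dj)*(Di - Dj)" by algebra
    also have "\<dots> = 4*r^2 + 4 - 4*(e*e)*r^2" unfolding Di_def Dj_def by algebra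
    also have "\<dots> = 4" using ee by simp
    finally show "Dj*(2 + Di - Dj) + Di*(2 - Di + Dj) = 4" .
    have "\<not> 2 dvd Dj" using Djodd by simp
    then have "coprime 2 Dj" using prime_imp_coprime[of 2 Dj] by simp
    then have "coprime (2*2) Dj" by (simp only: coprime_mult_left_iff)
    then show "coprime Dj 4" by (simp add: coprime_commute)
  qed
  have cDt: "coprime Dj (t+1)"
  proof (rule coprime_lin[of Dj "e*r - 1" "t+1" "2 - e*r" 3])
    have "Dj*(e*r - 1) + (t+1)*(2 - e*r) = 3 + (1 - e*e)*r^2" unfolding Dj_def t by algebra
    then show "Dj*(e*r - 1) + (t+1)*(2 - e*r) = 3" using ee by simp
    show "coprime Dj 3" using prime_imp_coprime[OF p3 Dj3] by (simp add: coprime_commute)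
  qed
  have cBA: "coprime ((t+1)*(Di*Dj)) A" using cAB Bf by (simp add: coprime_commute)
  then have cDjA: "coprime Dj A" "coprime Di A" "coprime (t+1) A" by simp_all
  have dvdB: "Dj dvd B" "Di dvd B" "t+1 dvd B" using Bf by simp_all
  have npDj: "\<not> p dvd Dj" using npB dvdB B_def by (meson dvd_trans)
  have npDi: "\<not> p dvd Di" using npB dvdB B_def by (meson dvd_trans)
  have npt: "\<not> p dvd t+1" using npB dvdB B_def by (meson dvd_trans)
  have qDj: "q dvd Dj"
  proof (rule ccontr)
    assume nq: "\<not> q dvd Dj"
    have c1: "coprime Dj (Di*(t+1)*A)" using cDD cDt cDjA by simp
    have "Dj*(Di*(t+1)*A) = p^3*q^3*y^2" using eqAB Bf by (simp add: algebra_simps)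
    then obtain w where w: "Dj = w^2" using sq_part[OF Dpos(2) c1 cop_pq[OF pq npDj nq]] by blast
    show False
      using e
    proof
      assume "e = 1"
      then show False using nsq2[OF r2, of w] w Dj_def by simp
    next
      assume "e = -1"
      then show False using nsq1[of r w] r2 w Dj_def by simp
    qed
  qed
  obtain di where di: "Di = 3*di" using d3 Di_def by (auto elim: dvdE)
  have dipos: "di > 0" using di Dpos by simp
  have kpos: "k > 0" using k t r2 by (smt (verit) zero_le_power2)
  have di3: "\<not> 3 dvd di"
  proof
    assume "3 dvd di"
    have "Di*Dj = t^2 - t + 1" unfolding DD t by algebra
    also have "\<dots> = 3*(3*(k^2 - k) + 1)" unfolding tk by (simp add: power2_eq_square algebra_simps)
    finally have "di*Dj = 3*(k^2 - k) + 1" using di by simp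
    moreover have "3 dvd di*Dj" using \<open>3 dvd di\<close> by simp
    ultimately have "3 dvd 3*(k^2 - k) + 1" by simp
    then show False by presburger
  qed
  have qDi: "\<not> q dvd Di"
  proof
    assume "q dvd Di"
    then have "is_unit q" using qDj cDD coprime_common_divisor by blast
    then show False using pq(2) not_prime_unit by blast
  qed
  have qdi: "\<not> q dvd di" using qDi di by (metis dvd_mult2 mult.commute)
  have npdi: "\<not> p dvd di" using npDi di by (metis dvd_mult2 mult.commute)
  have q3: "\<not> q dvd 3"
  proof
    assume "q dvd 3"
    then have "q = 3" using pq(2) p3 by (simp add: primes_dvd_imp_eq)
    then show False using qDj Dj3 by simp
  qed
  have qt: "\<not> q dvd t+1"
  proof
    assume "q dvd t+1"
    then have "is_unit q" using qDj cDt coprime_common_divisor by blast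
    then show False using pq(2) not_prime_unit by blast
  qed
  have A3: "\<not> 3 dvd A"
  proof
    assume "3 dvd A"
    moreover have "A = 3*(9*k^3 - 9*k^2 + 3*k - 1) + 1" unfolding A_def tk by algebra
    ultimately have "3 dvd 3*(9*k^3 - 9*k^2 + 3*k - 1) + 1" by simp
    then show False by presburger
  qed
  have p3': "\<not> p dvd 3"
  proof
    assume "p dvd 3"
    then have "p = 3" using pq(1) p3 by (simp add: primes_dvd_imp_eq)
    then show False using pA A3 A_def by simp
  qed
  have c3A: "coprime 3 A" using prime_imp_coprime[OF p3 A3] .
  have c3Dj: "coprime 3 Dj" using prime_imp_coprime[OF p3 Dj3] .
  have c3di: "coprime 3 di" using prime_imp_coprime[OF p3 di3] .
  have ctdi: "coprime (t+1) di"
  proof (rule coprime_primeI)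
    fix P :: int assume P: "prime P" "P dvd t+1" "P dvd di"
    have PDi: "P dvd Di" using P(3) di by simp
    have "Di*(-e*r - 1) + (t+1)*(2 + e*r) = 3 + (1 - e*e)*r^2" unfolding Di_def t by algebra
    then have "Di*(-e*r - 1) + (t+1)*(2 + e*r) = 3" using ee by simp
    then have "P dvd 3" using P(2) PDi by (metis dvd_add dvd_mult2)
    then have "P = 3" using P(1) p3 by (simp add: primes_dvd_imp_eq)
    then show False using P(3) di3 by simp
  qed
  have cdiDj: "coprime di Dj" using cDD di by (simp add: coprime_commute)
  have cdiA: "coprime di A" using cDjA(2) di by simp
  have F1pos: "3*(t+1) > 0" using k kpos by simp
  have c1: "coprime (3*(t+1)) (di*Dj*A)"
    unfolding coprime_mult_left_iff coprime_mult_right_iff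
    using c3A c3Dj c3di ctdi cDt cDjA(3) by (auto simp: coprime_commute)
  have np1: "\<not> p dvd 3*(t+1)" using prime_dvd_mult_iff[OF pq(1), of 3 "t+1"] p3' npt by blast
  have nq1: "\<not> q dvd 3*(t+1)" using prime_dvd_mult_iff[OF pq(2), of 3 "t+1"] q3 qt by blast
  have "(3*(t+1))*(di*Dj*A) = p^3*q^3*y^2" using eqAB Bf di by (simp add: algebra_simps)
  then obtain z where z: "3*(t+1) = z^2" using sq_part[OF F1pos c1 cop_pq[OF pq np1 nq1]] by blast
  then have "z^2 = 3*(3*k)" using k by simp
  then have "3 dvd z^2" by (metis dvd_triv_left)
  then have "3 dvd z" using p3 by (simp add: prime_dvd_power_iff)
  then obtain z1 where z1: "z = 3*z1" by (auto elim: dvdE)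
  have ka: "k = z1^2" using z z1 k by (simp add: power_mult_distrib)
  have c2: "coprime di (3*(t+1)*Dj*A)"
    unfolding coprime_mult_left_iff coprime_mult_right_iff
    using c3di ctdi cdiDj cdiA by (auto simp: coprime_commute)
  have "di*(3*(t+1)*Dj*A) = p^3*q^3*y^2" using eqAB Bf di by (simp add: algebra_simps)
  then obtain b where b: "di = b^2" using sq_part[OF dipos c2 cop_pq[OF pq npdi qdi]] by blast
  have h1: "r^2 + 2 = 3*z1^2" using t k ka by simp
  have h2: "r^2 + e*r + 1 = 3*b^2" using di b Di_def by simp
  show False using gap[OF r2 e h1 h2] .
qed



lemma caseC:
  fixes t u p q y :: int
  assumes tu: "t = 2*u" "u \<ge> 2" and eq: "(t^3 - 1)*(t^3 + 1) = p^3*q^3*y^2"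
    and pq: "prime p" "prime q" and pA: "p dvd t^3 - 1" and npB: "\<not> p dvd t^3 + 1"
    and qB: "q dvd t^3 + 1" and nqA: "\<not> q dvd t^3 - 1"
  shows False
proof -
  have p3: "prime (3::int)" by simp
  have t4: "t \<ge> 4" using tu by simp
  have te: "even t" using tu by simp
  define A where "A = t^3 - 1"
  define B where "B = t^3 + 1"
  define C1 where "C1 = t^2 + t + 1"
  define C2 where "C2 = t^2 - t + 1"
  have Af: "A = (t-1)*C1" unfolding A_def C1_def by algebra
  have Bf: "B = (t+1)*C2" unfolding B_def C2_def by algebra
  have eqAB: "A*B = p^3*q^3*y^2" using eq A_def B_def by simp
  have cAB: "coprime A B" using coprime_AB[OF te] A_def B_def by simp
  have tt: "t*t \<ge> t" using t4 by simp
  have L1: "\<exists>r. t - 1 = r^2" if n3: "\<not> 3 dvd t - 1"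
  proof -
    have c3: "coprime (t-1) 3" using prime_imp_coprime[OF p3 n3] by (simp add: coprime_commute)
    have ctC: "coprime (t-1) C1"
      by (rule coprime_lin[of _ "-(t+2)" _ 1 3]) (use c3 in \<open>simp_all add: C1_def power2_eq_square algebra_simps\<close>)
    have cB: "coprime ((t-1)*C1) B" using cAB Af by simp
    then have cB': "coprime (t-1) B" "coprime C1 B" by simp_all
    have nqt: "\<not> q dvd t-1" "\<not> q dvd C1" using nqA A_def Af by (metis dvd_mult2 mult.commute)+
    show ?thesis
    proof (cases "p dvd t - 1")
      case True
      have npC: "\<not> p dvd C1"
      proof
        assume "p dvd C1"
        then have "is_unit p" using True ctC coprime_common_divisor by blast
        then show False using pq(1) not_prime_unit by blast
      qed
      have c1: "coprime C1 ((t-1)*B)" using ctC cB' by (simp add: coprime_commute)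
      have "C1*((t-1)*B) = p^3*q^3*y^2" using eqAB Af by (simp add: algebra_simps)
      moreover have "C1 > 0" using tt t4 unfolding C1_def power2_eq_square by simp
      ultimately obtain w where "C1 = w^2" using sq_part[OF _ c1 cop_pq[OF pq npC nqt(2)]] by blast
      then show ?thesis using nsq1[of t w] t4 C1_def by simp
    next
      case False
      have c1: "coprime (t-1) (C1*B)" using ctC cB' by simp
      have "(t-1)*(C1*B) = p^3*q^3*y^2" using eqAB Af by (simp add: algebra_simps)
      moreover have "t - 1 > 0" using t4 by simp
      ultimately show ?thesis using sq_part[OF _ c1 cop_pq[OF pq False nqt(1)]] by blast
    qed
  qed
  have L2: "\<exists>s. t + 1 = s^2" if n3: "\<not> 3 dvd t + 1"
  proof -
    have c3: "coprime (t+1) 3" using prime_imp_coprime[OF p3 n3] by (simp add: coprime_commute)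
    have ctC: "coprime (t+1) C2"
      by (rule coprime_lin[of _ "2 - t" _ 1 3]) (use c3 in \<open>simp_all add: C2_def power2_eq_square algebra_simps\<close>)
    have cA: "coprime ((t+1)*C2) A" using cAB Bf by (simp add: coprime_commute)
    then have cA': "coprime (t+1) A" "coprime C2 A" by simp_all
    have npt: "\<not> p dvd t+1" "\<not> p dvd C2" using npB B_def Bf by (metis dvd_mult2 mult.commute)+
    show ?thesis
    proof (cases "q dvd t + 1")
      case True
      have nqC: "\<not> q dvd C2"
      proof
        assume "q dvd C2"
        then have "is_unit q" using True ctC coprime_common_divisor by blast
        then show False using pq(2) not_prime_unit by blast
      qed
      have c1: "coprime C2 ((t+1)*A)" using ctC cA' by (simp add: coprime_commute)
      have "C2*((t+1)*A) = p^3*q^3*y^2" using eqAB Bf by (simp add: algebra_simps)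
      moreover have "C2 > 0" using tt t4 unfolding C2_def power2_eq_square by simp
      ultimately obtain w where "C2 = w^2" using sq_part[OF _ c1 cop_pq[OF pq npt(2) nqC]] by blast
      then show ?thesis using nsq2[of t w] t4 C2_def by simp
    next
      case False
      have c1: "coprime (t+1) (C2*A)" using ctC cA' by simp
      have "(t+1)*(C2*A) = p^3*q^3*y^2" using eqAB Bf by (simp add: algebra_simps)
      moreover have "t + 1 > 0" using t4 by simp
      ultimately show ?thesis using sq_part[OF _ c1 cop_pq[OF pq npt(1) False]] by blast
    qed
  qed
  define j where "j = t div 3"
  define c where "c = t mod 3"
  have tj: "t = 3*j + c" unfolding j_def c_def by simp
  have "0 \<le> c" "c < 3" unfolding c_def by simp_all
  then consider "c = 0" | "c = 1" | "c = 2" by linarith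
  then show False
  proof cases
    case 1
    have "\<not> 3 dvd t - 1" "\<not> 3 dvd t + 1" using tj 1 by presburger+
    then obtain r s where "t - 1 = r^2" "t + 1 = s^2" using L1 L2 by blast
    then have "s^2 = r^2 + 2" by simp
    then show False by (rule sq_diff2)
  next
    case 2
    have "\<not> 3 dvd t + 1" using tj 2 by presburger
    then obtain s where s: "t + 1 = s^2" using L2 by blast
    obtain K where "s^2 = 3*K \<or> s^2 = 3*K+1" using sq_mod3(1) by blast
    then show False using s tj 2 by presburger
  next
    case 3
    have "\<not> 3 dvd t - 1" using tj 3 by presburger
    then obtain r where r: "t - 1 = r^2" using L1 by blast
    define r0 where "r0 = \<bar>r\<bar>"
    have r0: "r0 \<ge> 0" "t - 1 = r0^2" using r by (simp_all add: r0_def)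
    have r02: "r0 \<ge> 2"
    proof (rule ccontr)
      assume "\<not> r0 \<ge> 2"
      then have "r0 \<le> 1" by simp
      then have "r0*r0 \<le> 1*1" using r0 by (intro mult_mono) auto
      then show False using r0 t4 by (simp add: power2_eq_square)
    qed
    have t1: "t = r0^2 + 1" using r0 by simp
    have t3: "3 dvd t + 1" using tj 3 by presburger
    define Q where "Q = r0 div 3"
    define J where "J = r0 mod 3"
    have rQ: "r0 = 3*Q + J" unfolding Q_def J_def by simp
    have "0 \<le> J" "J < 3" unfolding J_def by simp_all
    then consider "J = 0" | "J = 1" | "J = 2" by linarith
    then show False
    proof cases
      case 1
      have "r0^2 = 3*(3*Q^2)" using rQ 1 by (simp add: power2_eq_square algebra_simps)
      then show False using r0(2) tj 3 by presburger
    next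
      case 2
      have "r0^2 + 1*r0 + 1 = 3*(3*Q^2 + 3*Q + 1)" using rQ 2 by (simp add: power2_eq_square algebra_simps)
      then have d: "3 dvd r0^2 + 1*r0 + 1" by (metis dvd_triv_left)
      show False using hard[OF r02 _ t1 te t3 d, of p q y] eq pq pA npB nqA by simp
    next
      case 3
      have "r0^2 + (-1)*r0 + 1 = 3*(3*Q^2 + 3*Q + 1)" using rQ 3 by (simp add: power2_eq_square algebra_simps)
      then have d: "3 dvd r0^2 + (-1)*r0 + 1" by (metis dvd_triv_left)
      show False using hard[OF r02 _ t1 te t3 d, of p q y] eq pq pA npB nqA by simp
    qed
  qed
qed



theorem corollary1:
  shows "\<not> (\<exists>x y p q :: int. prime p \<and> prime q \<and> 64 * x ^ 6 - 1 = p ^ 3 * q ^ 3 * y ^ 2)"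
proof
  assume "\<exists>x y p q :: int. prime p \<and> prime q \<and> 64 * x ^ 6 - 1 = p ^ 3 * q ^ 3 * y ^ 2"
  then obtain x y p q :: int where pq: "prime p" "prime q" and eq: "64 * x ^ 6 - 1 = p ^ 3 * q ^ 3 * y ^ 2"
    by blast
  have p2: "p \<ge> 2" "q \<ge> 2" using pq by (simp_all add: prime_ge_2_int)
  have p3pos: "p^3 \<ge> 8" "q^3 \<ge> 8"
  proof -
    have "p^3 \<ge> 2^3" "q^3 \<ge> 2^3" using p2 by (intro power_mono; simp)+
    then show "p^3 \<ge> 8" "q^3 \<ge> 8" by simp_all
  qed
  have pq64: "p^3*q^3 \<ge> 64"
  proof -
    have "p^3*q^3 \<ge> 8*8" using p3pos p2 by (intro mult_mono) auto
    then show ?thesis by simp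
  qed
  define u where "u = \<bar>x\<bar>"
  have u0: "u \<ge> 0" unfolding u_def by simp
  have u6: "u^6 = x^6" unfolding u_def by (simp add: power_even_abs)
  define t where "t = 2*u"
  have eqt: "(t^3 - 1)*(t^3 + 1) = p^3*q^3*y^2"
  proof -
    have "(t^3 - 1)*(t^3 + 1) = 64*u^6 - 1" unfolding t_def by algebra
    then show ?thesis using eq u6 by simp
  qed
  have u2: "u \<ge> 2"
  proof (rule ccontr)
    assume "\<not> u \<ge> 2"
    then consider "u = 0" | "u = 1" using u0 by linarith
    then show False
    proof cases
      case 1
      then have "x = 0" unfolding u_def by simp
      then have "p^3*q^3*y^2 = -1" using eq by simp
      moreover have "p^3*q^3*y^2 \<ge> 0" using pq64 by simp
      ultimately show False by simp
    next
      case 2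
      then have "x^6 = 1" using u6 by simp
      then have e63: "p^3*q^3*y^2 = 63" using eq by simp
      then have "y \<noteq> 0" by auto
      then have "y^2 \<ge> 1" using sq_cases[of y] by auto
      then have "p^3*q^3*y^2 \<ge> 64*1" using pq64 by (intro mult_mono) auto
      then show False using e63 by simp
    qed
  qed
  have t4: "t \<ge> 4" using u2 t_def by simp
  show False
  proof (cases "p = q")
    case True
    define T where "T = t^3"
    have T64: "T \<ge> 64"
    proof -
      have "t^3 \<ge> 4^3" using t4 by (intro power_mono) auto
      then show ?thesis unfolding T_def by simp
    qed
    have "(T - 1)*(T + 1) = (p^3*y)^2" using eqt True T_def by (simp add: power_mult_distrib power2_eq_square algebra_simps)
    moreover have "(T - 1)*(T + 1) = T^2 - 1" by (simp add: power2_eq_square algebra_simps)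
    moreover have "(T-1)^2 = T^2 - 2*T + 1" by (simp add: power2_eq_square algebra_simps)
    moreover have "(T - 1 + 1)^2 = T^2" by simp
    ultimately show False using no_sq_between[of "T - 1" "p^3*y"] T64 by linarith
  next
    case False
    have tu: "t = 2*u" using t_def by simp
    have cAB: "coprime (t^3 - 1) (t^3 + 1)" using coprime_AB[of t] t_def by simp
    have pd: "p dvd (t^3 - 1)*(t^3 + 1)" "q dvd (t^3 - 1)*(t^3 + 1)" unfolding eqt by simp_all
    then have pAB: "p dvd t^3 - 1 \<or> p dvd t^3 + 1" "q dvd t^3 - 1 \<or> q dvd t^3 + 1"
      using pq by (simp_all add: prime_dvd_mult_iff)
    have nb: "\<not> (p dvd t^3 - 1 \<and> p dvd t^3 + 1)" "\<not> (q dvd t^3 - 1 \<and> q dvd t^3 + 1)"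
      using cAB coprime_common_divisor pq not_prime_unit by blast+
    consider "p dvd t^3 - 1" "q dvd t^3 - 1" | "\<not> p dvd t^3 - 1" "\<not> q dvd t^3 - 1"
      | "p dvd t^3 - 1" "\<not> q dvd t^3 - 1" | "\<not> p dvd t^3 - 1" "q dvd t^3 - 1" by blast
    then show False
    proof cases
      case 1
      then show False using caseA[OF tu u2 eqt pq] nb by blast
    next
      case 2
      then show False using caseB[OF tu u2 eqt pq] by blast
    next
      case 3
      then show False using caseC[OF tu u2 eqt pq] nb pAB by blast
    next
      case 4
      have eqt': "(t^3 - 1)*(t^3 + 1) = q^3*p^3*y^2" using eqt by (simp add: mult.commute)
      show False using caseC[OF tu u2 eqt' pq(2) pq(1)] 4 nb pAB by blast
    qed
  qed
qed


end
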